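(* Let $X$ be a complex Hilbert space, $T\in\mathbb Z^+$, and $\mathcal A$ a bounded linear operator on $X^T$. \begin{enumerate} \item The harmonic resolvent set $\rho_T(\mathcal A)$ is open and contains a neighbourhood of the origin; in particular it is nonempty. \item If $\mathcal A=\mathcal T_T(A)$ for some $T$-periodic sequence $(A_t)_{t\in\mathbb Z}$ of bounded linear operators on $X$, then $e^{2\pi j/T}\rho_T(\mathcal A)=\rho_T(\mathcal A)$. \end{enumerate}
   Context: $j$ denotes the imaginary unit. $\mathcal N_T:=\mathrm{diag}(\epsilon^kI_X)_{k=0}^{T-1}$ on $X^T$ with $\epsilon:=e^{2\pi j/T}$. The harmonic resolvent set is $\rho_T(\mathcal A):=\{z\in\mathbb C: \mathcal N_T-z\mathcal A \text{ has a bounded inverse}\}$. For a $T$-periodic sequence $A_t$ of bounded operators on $X$, its Fourier coefficients are $\widehat A_k:=\frac1T\sum_{t=0}^{T-1}A_te^{-2\pi jtk/T}$ (so $A_t=\sum_{k=0}^{T-1}\widehat A_ke^{2\pi jtk/T}$), and its Toeplitz transform $\mathcal T_T(A)$ is the $T\times T$ block operator matrix on $X^T$ whose entry in row $r$ and column $\ell$ ($0\le r,\ell<T$) is $\widehat A_{(r-\ell)\bmod T}$. *)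

theory Defs
  imports "HOL-Analysis.Analysis"
begin

class complex_vector = real_vector +
  fixes scaleC :: "complex \<Rightarrow> 'a \<Rightarrow> 'a" (infixr "*\<^sub>C" 75)
  assumes scaleC_add_right: "a *\<^sub>C (x + y) = a *\<^sub>C x + a *\<^sub>C y"
    and scaleC_add_left: "(a + b) *\<^sub>C x = a *\<^sub>C x + b *\<^sub>C x"
    and scaleC_scaleC: "a *\<^sub>C (b *\<^sub>C x) = (a * b) *\<^sub>C x"
    and scaleC_one: "1 *\<^sub>C x = x"
    and scaleR_scaleC: "scaleR r x = complex_of_real r *\<^sub>C x"

class complex_normed_vector = complex_vector + real_normed_vector +
  assumes norm_scaleC: "norm (a *\<^sub>C x) = cmod a * norm x"

class complex_inner = complex_normed_vector +
  fixes cinner :: "'a \<Rightarrow> 'a \<Rightarrow> complex"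
  assumes cinner_commute: "cinner x y = cnj (cinner y x)"
    and cinner_add_left: "cinner (x + y) z = cinner x z + cinner y z"
    and cinner_scaleC_left: "cinner (a *\<^sub>C x) y = cnj a * cinner x y"
    and cinner_nonneg: "0 \<le> Re (cinner x x)"
    and cinner_eq_zero_iff: "cinner x x = 0 \<longleftrightarrow> x = 0"
    and norm_eq_sqrt_cinner: "norm x = sqrt (Re (cinner x x))"

class chilbert_space = complex_inner + complete_space

definition clinear :: "('a::complex_vector \<Rightarrow> 'b::complex_vector) \<Rightarrow> bool" where
  "clinear f \<longleftrightarrow> (\<forall>x y. f (x + y) = f x + f y) \<and> (\<forall>c x. f (c *\<^sub>C x) = c *\<^sub>C f x)"

definition bounded_clinear :: "('a::complex_normed_vector \<Rightarrow> 'b::complex_normed_vector) \<Rightarrow> bool" where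
  "bounded_clinear f \<longleftrightarrow> clinear f \<and> (\<exists>K. \<forall>x. norm (f x) \<le> norm x * K)"

text \<open>Elements of X^T are represented as sequences nat \<Rightarrow> 'a vanishing at indices \<ge> T;
  component k (for k < T) is the k-th entry. The norm is the Hilbert-space norm on X^T.\<close>

definition XT :: "nat \<Rightarrow> (nat \<Rightarrow> 'a::zero) set" where
  "XT T = {x. \<forall>k\<ge>T. x k = 0}"

definition XT_norm :: "nat \<Rightarrow> (nat \<Rightarrow> 'a::real_normed_vector) \<Rightarrow> real" where
  "XT_norm T x = sqrt (\<Sum>k<T. (norm (x k))\<^sup>2)"

definition bounded_op_XT :: "nat \<Rightarrow> ((nat \<Rightarrow> 'a::complex_normed_vector) \<Rightarrow> (nat \<Rightarrow> 'a)) \<Rightarrow> bool" where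
  "bounded_op_XT T A \<longleftrightarrow>
     (\<forall>x\<in>XT T. A x \<in> XT T) \<and>
     (\<forall>x\<in>XT T. \<forall>y\<in>XT T. A (\<lambda>k. x k + y k) = (\<lambda>k. A x k + A y k)) \<and>
     (\<forall>c. \<forall>x\<in>XT T. A (\<lambda>k. c *\<^sub>C x k) = (\<lambda>k. c *\<^sub>C A x k)) \<and>
     (\<exists>C. \<forall>x\<in>XT T. XT_norm T (A x) \<le> C * XT_norm T x)"

definition eps :: "nat \<Rightarrow> complex" where
  "eps T = cis (2 * pi / real T)"

definition N_op :: "nat \<Rightarrow> (nat \<Rightarrow> 'a::complex_vector) \<Rightarrow> (nat \<Rightarrow> 'a)" where
  "N_op T x = (\<lambda>k. if k < T then (eps T ^ k) *\<^sub>C x k else 0)"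

definition harmonic_resolvent :: "nat \<Rightarrow> ((nat \<Rightarrow> 'a::complex_normed_vector) \<Rightarrow> (nat \<Rightarrow> 'a)) \<Rightarrow> complex set" where
  "harmonic_resolvent T A =
     {z. \<exists>B. bounded_op_XT T B \<and>
          (\<forall>x\<in>XT T. B (\<lambda>k. N_op T x k - z *\<^sub>C A x k) = x) \<and>
          (\<forall>x\<in>XT T. (\<lambda>k. N_op T (B x) k - z *\<^sub>C A (B x) k) = x)}"

definition fourier_coeff :: "nat \<Rightarrow> (int \<Rightarrow> 'a::complex_vector \<Rightarrow> 'a) \<Rightarrow> nat \<Rightarrow> 'a \<Rightarrow> 'a" where
  "fourier_coeff T A k = (\<lambda>v. (1 / of_nat T) *\<^sub>C
      (\<Sum>t<T. cis (- 2 * pi * real t * real k / real T) *\<^sub>C A (int t) v))"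

definition toeplitz :: "nat \<Rightarrow> (int \<Rightarrow> 'a::complex_vector \<Rightarrow> 'a) \<Rightarrow> (nat \<Rightarrow> 'a) \<Rightarrow> (nat \<Rightarrow> 'a)" where
  "toeplitz T A x = (\<lambda>r. if r < T then
      (\<Sum>l<T. fourier_coeff T A (nat ((int r - int l) mod int T)) (x l)) else 0)"

end

theory Submission
  imports Defs
begin

lemma scaleC_zero_left[simp]: "(0::complex) *\<^sub>C (x::'a::complex_vector) = 0"
  using scaleR_scaleC[of 0 x] by simp

lemma scaleC_zero_right[simp]: "(a::complex) *\<^sub>C (0::'a::complex_vector) = 0"
  using scaleC_add_right[of a "0::'a" 0] by simp

lemma scaleC_minus_left: "(- a) *\<^sub>C (x::'a::complex_vector) = - (a *\<^sub>C x)"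
  using scaleC_add_left[of a "-a" x] by (simp add: eq_neg_iff_add_eq_0 add.commute)

lemma scaleC_minus_right: "a *\<^sub>C (- x::'a::complex_vector) = - (a *\<^sub>C x)"
  using scaleC_add_right[of a x "-x"] by (simp add: eq_neg_iff_add_eq_0 add.commute)

lemma scaleC_diff_right: "a *\<^sub>C (x - y::'a::complex_vector) = a *\<^sub>C x - a *\<^sub>C y"
  using scaleC_add_right[of a x "-y"] by (simp add: scaleC_minus_right)

lemma scaleC_diff_left: "(a - b) *\<^sub>C (x::'a::complex_vector) = a *\<^sub>C x - b *\<^sub>C x"
  using scaleC_add_left[of a "-b" x] by (simp add: scaleC_minus_left)

lemma scaleC_neg1: "(-1) *\<^sub>C (x::'a::complex_vector) = - x"
  by (simp add: scaleC_minus_left scaleC_one)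

lemma XT_iff: "x \<in> XT T \<longleftrightarrow> (\<forall>k\<ge>T. x k = 0)"
  by (simp add: XT_def)

lemma XT_add: "x \<in> XT T \<Longrightarrow> y \<in> XT T \<Longrightarrow> (\<lambda>k. x k + (y k::'a::ab_group_add)) \<in> XT T"
  by (simp add: XT_def)
lemma XT_diff: "x \<in> XT T \<Longrightarrow> y \<in> XT T \<Longrightarrow> (\<lambda>k. x k - (y k::'a::ab_group_add)) \<in> XT T"
  by (simp add: XT_def)
lemma XT_scale: "x \<in> XT T \<Longrightarrow> (\<lambda>k. c *\<^sub>C (x k::'a::complex_vector)) \<in> XT T"
  by (simp add: XT_def)
lemma XT_zero: "(\<lambda>k. 0) \<in> XT T"
  by (simp add: XT_def)

lemma XT_norm_L2: "XT_norm T x = L2_set (\<lambda>k. norm (x k)) {..<T}"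
  by (simp add: XT_norm_def L2_set_def)

lemma XT_norm_nonneg[simp]: "0 \<le> XT_norm T x"
  by (simp add: XT_norm_def sum_nonneg)

lemma XT_norm_comp: "k < T \<Longrightarrow> norm (x k) \<le> XT_norm T x"
  unfolding XT_norm_L2 by (rule member_le_L2_set) auto

lemma XT_norm_add: "XT_norm T (\<lambda>k. x k + y k) \<le> XT_norm T x + XT_norm T y"
proof -
  have "XT_norm T (\<lambda>k. x k + y k) \<le> L2_set (\<lambda>k. norm (x k) + norm (y k)) {..<T}"
    unfolding XT_norm_L2 by (rule L2_set_mono) (auto simp: norm_triangle_ineq)
  also have "\<dots> \<le> XT_norm T x + XT_norm T y"
    unfolding XT_norm_L2 by (rule L2_set_triangle_ineq)
  finally show ?thesis .
qed

lemma XT_norm_scale: "XT_norm T (\<lambda>k. c *\<^sub>C (x k::'a::complex_normed_vector)) = cmod c * XT_norm T x"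
  unfolding XT_norm_L2 by (simp add: norm_scaleC L2_set_right_distrib)

lemma XT_norm_minus_commute: "XT_norm T (\<lambda>k. x k - y k) = XT_norm T (\<lambda>k. y k - x k)"
  unfolding XT_norm_def by (simp add: norm_minus_commute)

lemma XT_norm_cong: "(\<And>k. k < T \<Longrightarrow> norm (x k) = norm (y k)) \<Longrightarrow> XT_norm T x = XT_norm T y"
  unfolding XT_norm_def by (rule arg_cong[where f=sqrt], rule sum.cong) auto

lemma XT_norm_zero_iff: "x \<in> XT T \<Longrightarrow> XT_norm T x = 0 \<longleftrightarrow> x = (\<lambda>k. 0)"
proof -
  assume x: "x \<in> XT T"
  have "XT_norm T x = 0 \<longleftrightarrow> (\<forall>k\<in>{..<T}. norm (x k) = 0)"
    unfolding XT_norm_L2 by (rule L2_set_eq_0_iff) simp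
  also have "\<dots> \<longleftrightarrow> x = (\<lambda>k. 0)"
    using x by (auto simp: XT_def fun_eq_iff, metis lessThan_iff not_le)
  finally show ?thesis .
qed

lemma bop_XT: "bounded_op_XT T A \<Longrightarrow> x \<in> XT T \<Longrightarrow> A x \<in> XT T"
  by (simp add: bounded_op_XT_def)

lemma bop_add: "bounded_op_XT T A \<Longrightarrow> x \<in> XT T \<Longrightarrow> y \<in> XT T \<Longrightarrow>
   A (\<lambda>k. x k + y k) = (\<lambda>k. A x k + A y k)"
  by (simp add: bounded_op_XT_def)

lemma bop_scale: "bounded_op_XT T A \<Longrightarrow> x \<in> XT T \<Longrightarrow>
   A (\<lambda>k. c *\<^sub>C x k) = (\<lambda>k. c *\<^sub>C A x k)"
  by (simp add: bounded_op_XT_def)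

lemma bop_diff: fixes A :: "(nat \<Rightarrow> 'a::complex_normed_vector) \<Rightarrow> (nat \<Rightarrow> 'a)"
  assumes "bounded_op_XT T A" "x \<in> XT T" "y \<in> XT T"
  shows "A (\<lambda>k. x k - y k) = (\<lambda>k. A x k - A y k)"
proof -
  have "A (\<lambda>k. x k - y k) = A (\<lambda>k. x k + (\<lambda>k. (-1) *\<^sub>C y k) k)"
    by (simp add: scaleC_neg1)
  also have "\<dots> = (\<lambda>k. A x k + A (\<lambda>k. (-1) *\<^sub>C y k) k)"
    using assms by (intro bop_add XT_scale)
  also have "\<dots> = (\<lambda>k. A x k - A y k)"
    using bop_scale[OF assms(1,3), of "-1"] by (simp add: scaleC_neg1)
  finally show ?thesis .
qed

lemma bop_zero: assumes "bounded_op_XT T A" shows "A (\<lambda>k. 0) = (\<lambda>k. 0)"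
  using bop_scale[OF assms XT_zero, of 0] by simp

lemma bop_bound: fixes A :: "(nat \<Rightarrow> 'a::complex_normed_vector) \<Rightarrow> (nat \<Rightarrow> 'a)"
  assumes "bounded_op_XT T A"
  obtains C where "C > 0" "\<And>x::nat \<Rightarrow> 'a. x \<in> XT T \<Longrightarrow> XT_norm T (A x) \<le> C * XT_norm T x"
proof -
  obtain C where C: "\<forall>x\<in>XT T. XT_norm T (A x) \<le> C * XT_norm T x"
    using assms by (auto simp: bounded_op_XT_def)
  show ?thesis
  proof (rule that[of "max C 1"])
    fix x :: "nat \<Rightarrow> 'a" assume "x \<in> XT T"
    then have "XT_norm T (A x) \<le> C * XT_norm T x" using C by auto
    also have "\<dots> \<le> max C 1 * XT_norm T x" by (simp add: mult_right_mono)
    finally show "XT_norm T (A x) \<le> max C 1 * XT_norm T x" .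
  qed simp
qed

section \<open>The operator N - z A\<close>

definition Lz :: "nat \<Rightarrow> ((nat \<Rightarrow> 'a) \<Rightarrow> (nat \<Rightarrow> 'a)) \<Rightarrow> complex \<Rightarrow> (nat \<Rightarrow> 'a::complex_normed_vector) \<Rightarrow> (nat \<Rightarrow> 'a)" where
  "Lz T A z x = (\<lambda>k. N_op T x k - z *\<^sub>C A x k)"

lemma hr_alt: "harmonic_resolvent T A = {z. \<exists>B. bounded_op_XT T B \<and>
          (\<forall>x\<in>XT T. B (Lz T A z x) = x) \<and> (\<forall>x\<in>XT T. Lz T A z (B x) = x)}"
  unfolding harmonic_resolvent_def Lz_def ..

lemma N_XT: "N_op T x \<in> XT T"
  by (simp add: N_op_def XT_def)

lemma Lz_XT: assumes "bounded_op_XT T A" "x \<in> XT T" shows "Lz T A z x \<in> XT T"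
  unfolding Lz_def by (rule XT_diff[OF N_XT XT_scale[OF bop_XT[OF assms]]])

lemma Lz_add: assumes "bounded_op_XT T A" "x \<in> XT T" "y \<in> XT T"
  shows "Lz T A z (\<lambda>k. x k + y k) = (\<lambda>k. Lz T A z x k + Lz T A z y k)"
  using assms by (simp add: Lz_def N_op_def bop_add scaleC_add_right fun_eq_iff)

lemma Lz_scale: assumes "bounded_op_XT T A" "x \<in> XT T"
  shows "Lz T A z (\<lambda>k. c *\<^sub>C x k) = (\<lambda>k. c *\<^sub>C Lz T A z x k)"
  using assms by (simp add: Lz_def N_op_def bop_scale scaleC_diff_right scaleC_scaleC fun_eq_iff mult.commute)

lemma Lz_shift: "Lz T A z y = (\<lambda>k. Lz T A z0 y k - (z - z0) *\<^sub>C A y k)"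
  by (simp add: Lz_def scaleC_diff_left fun_eq_iff)

lemma resolvent_intro:
  fixes A :: "(nat \<Rightarrow> 'a::complex_normed_vector) \<Rightarrow> (nat \<Rightarrow> 'a)"
  assumes A: "bounded_op_XT T A"
    and ex: "\<And>x. x \<in> XT T \<Longrightarrow> \<exists>y\<in>XT T. Lz T A z y = x"
    and inj: "\<And>y1 y2. y1 \<in> XT T \<Longrightarrow> y2 \<in> XT T \<Longrightarrow> Lz T A z y1 = Lz T A z y2 \<Longrightarrow> y1 = y2"
    and bnd: "\<And>x y. x \<in> XT T \<Longrightarrow> y \<in> XT T \<Longrightarrow> Lz T A z y = x \<Longrightarrow> XT_norm T y \<le> C * XT_norm T x"
  shows "z \<in> harmonic_resolvent T A"
proof -
  define B where "B x = (if x \<in> XT T then (THE y. y \<in> XT T \<and> Lz T A z y = x) else (\<lambda>k. 0))" for x :: "nat \<Rightarrow> 'a"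
  have ex1: "\<exists>!y. y \<in> XT T \<and> Lz T A z y = x" if "x \<in> XT T" for x
    using ex[OF that] inj by blast
  have B1: "B x \<in> XT T \<and> Lz T A z (B x) = x" if "x \<in> XT T" for x
    using theI'[OF ex1[OF that]] that by (simp add: B_def)
  have Bu: "B x = y" if "x \<in> XT T" "y \<in> XT T" "Lz T A z y = x" for x y
    using B1[OF that(1)] that inj by blast
  have "bounded_op_XT T B"
    unfolding bounded_op_XT_def
  proof (intro conjI ballI allI)
    fix x :: "nat \<Rightarrow> 'a" assume "x \<in> XT T" then show "B x \<in> XT T" using B1 by blast
  next
    fix x y :: "nat \<Rightarrow> 'a" assume xy: "x \<in> XT T" "y \<in> XT T"
    show "B (\<lambda>k. x k + y k) = (\<lambda>k. B x k + B y k)"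
      using xy B1 by (intro Bu XT_add) (auto simp: Lz_add[OF A])
  next
    fix c and x :: "nat \<Rightarrow> 'a" assume x: "x \<in> XT T"
    show "B (\<lambda>k. c *\<^sub>C x k) = (\<lambda>k. c *\<^sub>C B x k)"
      using x B1 by (intro Bu XT_scale) (auto simp: Lz_scale[OF A])
  next
    show "\<exists>C. \<forall>x\<in>XT T. XT_norm T (B x) \<le> C * XT_norm T x"
      using B1 bnd by blast
  qed
  moreover have "\<forall>x\<in>XT T. B (Lz T A z x) = x"
    using Bu Lz_XT[OF A] by blast
  moreover have "\<forall>x\<in>XT T. Lz T A z (B x) = x"
    using B1 by blast
  ultimately show ?thesis unfolding hr_alt by blast
qed

definition dXT :: "nat \<Rightarrow> (nat \<Rightarrow> 'a::real_normed_vector) \<Rightarrow> (nat \<Rightarrow> 'a) \<Rightarrow> real" where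
  "dXT T x y = XT_norm T (\<lambda>k. x k - y k)"

lemma metric_XT: "Metric_space (XT T) (dXT T :: (nat \<Rightarrow> 'a::real_normed_vector) \<Rightarrow> _)"
proof
  fix x y z :: "nat \<Rightarrow> 'a"
  show "0 \<le> dXT T x y" by (simp add: dXT_def)
  show "dXT T x y = dXT T y x" unfolding dXT_def by (rule XT_norm_minus_commute)
  assume xyz: "x \<in> XT T" "y \<in> XT T"
  then show "dXT T x y = 0 \<longleftrightarrow> x = y"
    unfolding dXT_def by (subst XT_norm_zero_iff) (auto simp: XT_diff fun_eq_iff)
  assume "z \<in> XT T"
  have "dXT T x z = XT_norm T (\<lambda>k. (x k - y k) + (y k - z k))" by (simp add: dXT_def)
  also have "\<dots> \<le> dXT T x y + dXT T y z" unfolding dXT_def by (rule XT_norm_add)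
  finally show "dXT T x z \<le> dXT T x y + dXT T y z" .
qed

lemma mcomplete_XT: "Metric_space.mcomplete (XT T) (dXT T :: (nat \<Rightarrow> 'a::{real_normed_vector,complete_space}) \<Rightarrow> _)"
proof -
  interpret M: Metric_space "XT T" "dXT T :: (nat \<Rightarrow> 'a) \<Rightarrow> _" by (rule metric_XT)
  show ?thesis unfolding M.mcomplete_def
  proof (intro allI impI)
    fix \<sigma> :: "nat \<Rightarrow> nat \<Rightarrow> 'a"
    assume cs: "M.MCauchy \<sigma>"
    have rng: "\<sigma> n \<in> XT T" for n using cs unfolding M.MCauchy_def by auto
    have cauchy: "Cauchy (\<lambda>n. \<sigma> n k)" for k
    proof (cases "k < T")
      case True
      show ?thesis unfolding Cauchy_def
      proof (intro allI impI)
        fix e :: real assume "e > 0"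
        then obtain N where N: "\<And>n n'. N \<le> n \<Longrightarrow> N \<le> n' \<Longrightarrow> dXT T (\<sigma> n) (\<sigma> n') < e"
          using cs unfolding M.MCauchy_def by meson
        show "\<exists>M. \<forall>m\<ge>M. \<forall>n\<ge>M. dist (\<sigma> m k) (\<sigma> n k) < e"
        proof (intro exI allI impI)
          fix m n assume "N \<le> m" "N \<le> n"
          have "dist (\<sigma> m k) (\<sigma> n k) = norm (\<sigma> m k - \<sigma> n k)" by (simp add: dist_norm)
          also have "\<dots> \<le> dXT T (\<sigma> m) (\<sigma> n)" unfolding dXT_def
            using XT_norm_comp[OF True, of "\<lambda>k. \<sigma> m k - \<sigma> n k"] by simp
          also have "\<dots> < e" using N \<open>N \<le> m\<close> \<open>N \<le> n\<close> by blast
          finally show "dist (\<sigma> m k) (\<sigma> n k) < e" .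
        qed
      qed
    next
      case False
      then have "(\<lambda>n. \<sigma> n k) = (\<lambda>n. 0)" using rng by (auto simp: XT_def)
      then show ?thesis by (metis convergent_const convergent_Cauchy)
    qed
    define y where "y k = (if k < T then lim (\<lambda>n. \<sigma> n k) else 0)" for k
    have y: "y \<in> XT T" by (simp add: y_def XT_def)
    have lim: "(\<lambda>n. \<sigma> n k) \<longlonglongrightarrow> y k" for k
    proof (cases "k < T")
      case True
      then show ?thesis using cauchy[of k] by (simp add: y_def Cauchy_convergent_iff convergent_LIMSEQ_iff)
    next
      case False
      then have "(\<lambda>n. \<sigma> n k) = (\<lambda>n. 0)" using rng by (auto simp: XT_def)
      then show ?thesis using False by (simp add: y_def)
    qed
    have lim0: "(\<lambda>n. norm (\<sigma> n k - y k)) \<longlonglongrightarrow> 0" for k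
      using lim[of k] by (simp add: LIM_zero_iff tendsto_norm_zero)
    have sl: "(\<lambda>n. \<Sum>k<T. norm (\<sigma> n k - y k)) \<longlonglongrightarrow> 0"
      by (rule tendsto_null_sum) (rule lim0)
    have le: "norm (dXT T (\<sigma> n) y) \<le> (\<Sum>k<T. norm (\<sigma> n k - y k))" for n
    proof -
      have "dXT T (\<sigma> n) y \<le> (\<Sum>k<T. norm (\<sigma> n k - y k))"
        unfolding dXT_def XT_norm_L2 by (rule L2_set_le_sum) simp
      moreover have "norm (dXT T (\<sigma> n) y) = dXT T (\<sigma> n) y" unfolding dXT_def by simp
      ultimately show ?thesis by simp
    qed
    have "(\<lambda>n. dXT T (\<sigma> n) y) \<longlonglongrightarrow> 0"
      by (rule Lim_null_comparison[OF always_eventually[OF allI[OF le]] sl])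
    then show "\<exists>x. limitin M.mtopology \<sigma> x sequentially"
      using y rng by (auto simp: M.limitin_metric_dist_null)
  qed
qed

section \<open>Openness\<close>

lemma open_step:
  fixes A :: "(nat \<Rightarrow> 'a::chilbert_space) \<Rightarrow> (nat \<Rightarrow> 'a)"
  assumes A: "bounded_op_XT T A" and z0: "z0 \<in> harmonic_resolvent T A"
  shows "\<exists>r>0. ball z0 r \<subseteq> harmonic_resolvent T A"
proof -
  obtain B where B: "bounded_op_XT T B" "\<And>x. x \<in> XT T \<Longrightarrow> B (Lz T A z0 x) = x"
      "\<And>x. x \<in> XT T \<Longrightarrow> Lz T A z0 (B x) = x"
    using z0 unfolding hr_alt by blast
  obtain Ca where Ca: "Ca > 0" "\<And>x. x \<in> XT T \<Longrightarrow> XT_norm T (A x) \<le> Ca * XT_norm T x"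
    using bop_bound[OF A] by blast
  obtain Cb where Cb: "Cb > 0" "\<And>x. x \<in> XT T \<Longrightarrow> XT_norm T (B x) \<le> Cb * XT_norm T x"
    using bop_bound[OF B(1)] by blast
  define r where "r = 1 / (2 * Ca * Cb)"
  have "r > 0" using Ca Cb by (simp add: r_def)
  moreover have "ball z0 r \<subseteq> harmonic_resolvent T A"
  proof
    fix z assume "z \<in> ball z0 r"
    define w where "w = z - z0"
    have "cmod w < r" using \<open>z \<in> ball z0 r\<close> by (simp add: w_def dist_norm norm_minus_commute)
    then have "cmod w * (Ca * Cb) < r * (Ca * Cb)" using Ca Cb by (intro mult_strict_right_mono) auto
    then have wr: "cmod w * Ca * Cb < 1/2" using Ca Cb by (simp add: r_def mult.assoc)
    define c where "c = cmod w * Ca * Cb"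
    have c: "0 \<le> c" "c < 1/2" using wr Ca Cb by (auto simp: c_def)
    define Phi where "Phi x y = B (\<lambda>k. x k + w *\<^sub>C A y k)" for x y :: "nat \<Rightarrow> 'a"
    have PhiXT: "Phi x y \<in> XT T" if "x \<in> XT T" "y \<in> XT T" for x y
      unfolding Phi_def using that by (intro bop_XT[OF B(1)] XT_add XT_scale bop_XT[OF A])
    have char: "Lz T A z y = x \<longleftrightarrow> Phi x y = y" if xy: "x \<in> XT T" "y \<in> XT T" for x y
    proof
      assume "Lz T A z y = x"
      then have "(\<lambda>k. Lz T A z0 y k - w *\<^sub>C A y k) = x" using Lz_shift[of T A z y z0] by (simp add: w_def)
      then have "Lz T A z0 y = (\<lambda>k. x k + w *\<^sub>C A y k)" by (auto simp: fun_eq_iff diff_eq_eq)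
      then show "Phi x y = y" using B(2)[OF xy(2)] by (simp add: Phi_def)
    next
      assume "Phi x y = y"
      then have "Lz T A z0 y = (\<lambda>k. x k + w *\<^sub>C A y k)"
        unfolding Phi_def using B(3) xy by (metis XT_add XT_scale bop_XT[OF A])
      then show "Lz T A z y = x" using Lz_shift[of T A z y z0] by (simp add: w_def)
    qed
    have contr: "dXT T (Phi x y1) (Phi x y2) \<le> c * dXT T y1 y2"
      if "x \<in> XT T" "y1 \<in> XT T" "y2 \<in> XT T" for x y1 y2
    proof -
      have u1: "(\<lambda>k. x k + w *\<^sub>C A y1 k) \<in> XT T" and u2: "(\<lambda>k. x k + w *\<^sub>C A y2 k) \<in> XT T"
        using that by (auto intro!: XT_add XT_scale bop_XT[OF A])
      have d: "(\<lambda>k. y1 k - y2 k) \<in> XT T" using that by (intro XT_diff)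
      have "(\<lambda>k. Phi x y1 k - Phi x y2 k) = B (\<lambda>k. (x k + w *\<^sub>C A y1 k) - (x k + w *\<^sub>C A y2 k))"
        unfolding Phi_def using bop_diff[OF B(1) u1 u2] by simp
      also have "(\<lambda>k. (x k + w *\<^sub>C A y1 k) - (x k + w *\<^sub>C A y2 k)) = (\<lambda>k. w *\<^sub>C A (\<lambda>k. y1 k - y2 k) k)"
        using bop_diff[OF A that(2,3)] by (simp add: scaleC_diff_right)
      also have "B \<dots> = (\<lambda>k. w *\<^sub>C B (A (\<lambda>k. y1 k - y2 k)) k)"
        by (rule bop_scale[OF B(1) bop_XT[OF A d]])
      finally have "dXT T (Phi x y1) (Phi x y2) = cmod w * XT_norm T (B (A (\<lambda>k. y1 k - y2 k)))"
        by (simp add: dXT_def XT_norm_scale)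
      also have "\<dots> \<le> cmod w * (Cb * (Ca * dXT T y1 y2))"
      proof (intro mult_left_mono)
        have "XT_norm T (B (A (\<lambda>k. y1 k - y2 k))) \<le> Cb * XT_norm T (A (\<lambda>k. y1 k - y2 k))"
          by (rule Cb(2)[OF bop_XT[OF A d]])
        also have "\<dots> \<le> Cb * (Ca * dXT T y1 y2)"
          using Ca(2)[OF d] Cb(1) by (simp add: dXT_def)
        finally show "XT_norm T (B (A (\<lambda>k. y1 k - y2 k))) \<le> Cb * (Ca * dXT T y1 y2)" .
      qed simp
      also have "\<dots> = c * dXT T y1 y2" by (simp add: c_def)
      finally show ?thesis .
    qed
    interpret M: Metric_space "XT T" "dXT T :: (nat \<Rightarrow> 'a) \<Rightarrow> _" by (rule metric_XT)
    show "z \<in> harmonic_resolvent T A"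
    proof (rule resolvent_intro[OF A, where C = "2 * Cb"])
      fix x :: "nat \<Rightarrow> 'a" assume x: "x \<in> XT T"
      have fim: "Phi x \<in> XT T \<rightarrow> XT T" using PhiXT[OF x] by blast
      have ne: "XT T \<noteq> {}" using XT_zero[of T] by blast
      have c1: "c < 1" using c by simp
      have "\<exists>y. y \<in> XT T \<and> Phi x y = y"
      proof (rule M.Banach_fixedpoint_thm[OF mcomplete_XT ne fim c1])
        show "\<And>y1 y2. y1 \<in> XT T \<Longrightarrow> y2 \<in> XT T \<Longrightarrow> dXT T (Phi x y1) (Phi x y2) \<le> c * dXT T y1 y2"
          by (rule contr[OF x])
        show "\<And>y. y \<in> XT T \<Longrightarrow> Phi x y = y \<Longrightarrow> \<exists>y. y \<in> XT T \<and> Phi x y = y" by blast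
      qed
      then obtain y where "y \<in> XT T" "Phi x y = y" by blast
      then show "\<exists>y\<in>XT T. Lz T A z y = x" using char[OF x] by blast
    next
      fix y1 y2 :: "nat \<Rightarrow> 'a" assume y: "y1 \<in> XT T" "y2 \<in> XT T" "Lz T A z y1 = Lz T A z y2"
      define x where "x = Lz T A z y2"
      have x: "x \<in> XT T" unfolding x_def by (rule Lz_XT[OF A y(2)])
      have "Phi x y1 = y1" "Phi x y2 = y2" using char[OF x] y by (auto simp: x_def)
      moreover have fim: "Phi x \<in> XT T \<rightarrow> XT T" using PhiXT[OF x] by blast
      moreover have c1: "c < 1" using c by simp
      ultimately show "y1 = y2"
        using M.contraction_imp_unique_fixpoint[of "Phi x" y1 y2 c, OF _ _ _ _ contr[OF x] y(1) y(2)] by blast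
    next
      fix x y :: "nat \<Rightarrow> 'a" assume xy: "x \<in> XT T" "y \<in> XT T" "Lz T A z y = x"
      then have "y = Phi x y" using char by auto
      then have "XT_norm T y = XT_norm T (B (\<lambda>k. x k + w *\<^sub>C A y k))" by (simp add: Phi_def)
      also have "\<dots> \<le> Cb * XT_norm T (\<lambda>k. x k + w *\<^sub>C A y k)"
        using xy by (intro Cb(2) XT_add XT_scale bop_XT[OF A])
      also have "\<dots> \<le> Cb * (XT_norm T x + cmod w * (Ca * XT_norm T y))"
      proof (intro mult_left_mono)
        have "XT_norm T (\<lambda>k. x k + w *\<^sub>C A y k) \<le> XT_norm T x + XT_norm T (\<lambda>k. w *\<^sub>C A y k)"
          by (rule XT_norm_add)
        also have "\<dots> \<le> XT_norm T x + cmod w * (Ca * XT_norm T y)"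
          using Ca(2)[OF xy(2)] by (simp add: XT_norm_scale mult_left_mono)
        finally show "XT_norm T (\<lambda>k. x k + w *\<^sub>C A y k) \<le> XT_norm T x + cmod w * (Ca * XT_norm T y)" .
      qed (use Cb in simp)
      also have "\<dots> = Cb * XT_norm T x + c * XT_norm T y" by (simp add: c_def algebra_simps)
      also have "\<dots> \<le> Cb * XT_norm T x + 1/2 * XT_norm T y"
        using c by (intro add_left_mono mult_right_mono) auto
      finally show "XT_norm T y \<le> 2 * Cb * XT_norm T x" by simp
    qed
  qed
  ultimately show ?thesis by blast
qed

lemma eps_norm: "cmod (eps T) = 1"
  by (simp add: eps_def)

lemma eps_nz: "eps T \<noteq> 0"
  using eps_norm[of T] by auto

lemma eps_pow_T: "T > 0 \<Longrightarrow> eps T ^ T = 1"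
  unfolding eps_def Complex.DeMoivre by simp

lemma eps_pow_mod: assumes "T > 0" shows "eps T ^ n = eps T ^ (n mod T)"
proof -
  have "eps T ^ n = eps T ^ (T * (n div T) + n mod T)" by (metis div_mult_mod_eq mult.commute)
  also have "\<dots> = (eps T ^ T) ^ (n div T) * eps T ^ (n mod T)" by (simp only: power_add power_mult)
  finally show ?thesis using eps_pow_T[OF assms] by simp
qed

lemma norm_eps_pow: "cmod (eps T ^ k) = 1"
  by (simp add: norm_power eps_norm)

lemma zero_in:
  fixes A :: "(nat \<Rightarrow> 'a::complex_normed_vector) \<Rightarrow> (nat \<Rightarrow> 'a)"
  assumes A: "bounded_op_XT T A"
  shows "0 \<in> harmonic_resolvent T A"
proof (rule resolvent_intro[OF A, where C = 1])
  have L0: "Lz T A 0 y = N_op T y" for y by (simp add: Lz_def)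
  {
    fix x :: "nat \<Rightarrow> 'a" assume x: "x \<in> XT T"
    define y where "y = (\<lambda>k. if k < T then inverse (eps T ^ k) *\<^sub>C x k else 0)"
    have "y \<in> XT T" by (simp add: y_def XT_def)
    moreover have "Lz T A 0 y = x"
      using x eps_nz[of T] by (auto simp: L0 N_op_def y_def fun_eq_iff scaleC_scaleC scaleC_one XT_def)
    ultimately show "\<exists>y\<in>XT T. Lz T A 0 y = x" by blast
  next
    fix y1 y2 :: "nat \<Rightarrow> 'a" assume y: "y1 \<in> XT T" "y2 \<in> XT T" "Lz T A 0 y1 = Lz T A 0 y2"
    show "y1 = y2"
    proof
      fix k show "y1 k = y2 k"
      proof (cases "k < T")
        case True
        then have "eps T ^ k *\<^sub>C y1 k = eps T ^ k *\<^sub>C y2 k"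
          using y(3) by (auto simp: L0 N_op_def fun_eq_iff dest: spec[of _ k])
        then have "inverse (eps T ^ k) *\<^sub>C (eps T ^ k *\<^sub>C y1 k) = inverse (eps T ^ k) *\<^sub>C (eps T ^ k *\<^sub>C y2 k)"
          by simp
        then show ?thesis using eps_nz[of T] by (simp add: scaleC_scaleC scaleC_one)
      next
        case False then show ?thesis using y by (simp add: XT_def)
      qed
    qed
  next
    fix x y :: "nat \<Rightarrow> 'a" assume xy: "x \<in> XT T" "y \<in> XT T" "Lz T A 0 y = x"
    have "XT_norm T y = XT_norm T x"
      using xy(3) by (intro XT_norm_cong) (auto simp: L0 N_op_def norm_scaleC norm_eps_pow)
    then show "XT_norm T y \<le> 1 * XT_norm T x" by simp
  }
qed

section \<open>Cyclic shifts\<close>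

definition sg :: "nat \<Rightarrow> nat \<Rightarrow> nat" where "sg T k = (k + T - 1) mod T"
definition tg :: "nat \<Rightarrow> nat \<Rightarrow> nat" where "tg T k = (k + 1) mod T"

lemma sg_lt: "T > 0 \<Longrightarrow> sg T k < T" by (simp add: sg_def)
lemma tg_lt: "T > 0 \<Longrightarrow> tg T k < T" by (simp add: tg_def)

lemma sg_eq: "k < T \<Longrightarrow> sg T k = (if k = 0 then T - 1 else k - 1)"
  unfolding sg_def by (cases "k = 0") (auto simp: mod_if)

lemma tg_eq: "k < T \<Longrightarrow> tg T k = (if k + 1 = T then 0 else k + 1)"
  unfolding tg_def by (auto simp: mod_if)

lemma tg_sg: "k < T \<Longrightarrow> tg T (sg T k) = k"
  by (cases "k = 0") (auto simp: sg_eq tg_eq)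

lemma sg_tg: "k < T \<Longrightarrow> sg T (tg T k) = k"
  by (cases "k + 1 = T") (auto simp: sg_eq tg_eq)

lemma sum_sg: "(\<Sum>k<T. f (sg T k)) = (\<Sum>k<T. f k)"
proof (cases "T > 0")
  case True
  show ?thesis
    by (rule sum.reindex_bij_witness[where j = "sg T" and i = "tg T"])
       (auto simp: tg_sg sg_tg sg_lt tg_lt True)
qed simp

lemma sum_tg: "(\<Sum>k<T. f (tg T k)) = (\<Sum>k<T. f k)"
proof (cases "T > 0")
  case True
  show ?thesis
    by (rule sum.reindex_bij_witness[where j = "tg T" and i = "sg T"])
       (auto simp: tg_sg sg_tg sg_lt tg_lt True)
qed simp

definition Pop :: "nat \<Rightarrow> (nat \<Rightarrow> 'a::zero) \<Rightarrow> (nat \<Rightarrow> 'a)" where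
  "Pop T x = (\<lambda>k. if k < T then x (sg T k) else 0)"
definition Qop :: "nat \<Rightarrow> (nat \<Rightarrow> 'a::zero) \<Rightarrow> (nat \<Rightarrow> 'a)" where
  "Qop T x = (\<lambda>k. if k < T then x (tg T k) else 0)"

lemma Pop_XT: "Pop T x \<in> XT T" by (simp add: Pop_def XT_def)
lemma Qop_XT: "Qop T x \<in> XT T" by (simp add: Qop_def XT_def)

lemma Pop_Qop: "T > 0 \<Longrightarrow> x \<in> XT T \<Longrightarrow> Pop T (Qop T x) = x"
  by (auto simp: Pop_def Qop_def fun_eq_iff sg_lt tg_sg XT_def)

lemma Qop_Pop: "T > 0 \<Longrightarrow> x \<in> XT T \<Longrightarrow> Qop T (Pop T x) = x"
  by (auto simp: Pop_def Qop_def fun_eq_iff tg_lt sg_tg XT_def)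

lemma Pop_scale: "Pop T (\<lambda>k. c *\<^sub>C (x k :: 'a::complex_vector)) = (\<lambda>k. c *\<^sub>C Pop T x k)"
  by (simp add: Pop_def fun_eq_iff)
lemma Qop_scale: "Qop T (\<lambda>k. c *\<^sub>C (x k :: 'a::complex_vector)) = (\<lambda>k. c *\<^sub>C Qop T x k)"
  by (simp add: Qop_def fun_eq_iff)

lemma Pop_norm: "T > 0 \<Longrightarrow> XT_norm T (Pop T x) = XT_norm T x"
  unfolding XT_norm_def Pop_def using sum_sg[of "\<lambda>k. (norm (x k))\<^sup>2" T] by simp
lemma Qop_norm: "T > 0 \<Longrightarrow> XT_norm T (Qop T x) = XT_norm T x"
  unfolding XT_norm_def Qop_def using sum_tg[of "\<lambda>k. (norm (x k))\<^sup>2" T] by simp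

lemma int_sg: "T > 0 \<Longrightarrow> int (sg T k) = (int k - 1) mod int T"
proof -
  assume T: "T > 0"
  have "int (sg T k) = int (k + T - 1) mod int T" by (simp add: sg_def zmod_int)
  also have "int (k + T - 1) = (int k - 1) + int T" using T by simp
  also have "((int k - 1) + int T) mod int T = (int k - 1) mod int T" by simp
  finally show ?thesis .
qed

lemma toeplitz_Pop: assumes "T > 0"
  shows "toeplitz T A (Pop T x) = Pop T (toeplitz T A x)"
proof
  fix r
  show "toeplitz T A (Pop T x) r = Pop T (toeplitz T A x) r"
  proof (cases "r < T")
    case True
    have "toeplitz T A (Pop T x) r = (\<Sum>l<T. fourier_coeff T A (nat ((int r - int l) mod int T)) (x (sg T l)))"
      using True by (simp add: toeplitz_def Pop_def)
    also have "\<dots> = (\<Sum>l<T. fourier_coeff T A (nat ((int (sg T r) - int (sg T l)) mod int T)) (x (sg T l)))"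
    proof (rule sum.cong[OF refl])
      fix l
      have "(int (sg T r) - int (sg T l)) mod int T = ((int r - 1) mod int T - (int l - 1) mod int T) mod int T"
        using assms by (simp add: int_sg)
      also have "\<dots> = ((int r - 1) - (int l - 1)) mod int T" by (simp add: mod_diff_eq)
      also have "\<dots> = (int r - int l) mod int T" by simp
      finally show "fourier_coeff T A (nat ((int r - int l) mod int T)) (x (sg T l)) =
          fourier_coeff T A (nat ((int (sg T r) - int (sg T l)) mod int T)) (x (sg T l))" by simp
    qed
    also have "\<dots> = (\<Sum>l<T. fourier_coeff T A (nat ((int (sg T r) - int l) mod int T)) (x l))"
      by (rule sum_sg[where f = "\<lambda>l. fourier_coeff T A (nat ((int (sg T r) - int l) mod int T)) (x l)"])
    also have "\<dots> = Pop T (toeplitz T A x) r"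
      using True assms by (simp add: Pop_def toeplitz_def sg_lt)
    finally show ?thesis .
  next
    case False
    then show ?thesis by (simp add: toeplitz_def Pop_def)
  qed
qed

lemma N_Pop: assumes "T > 0"
  shows "N_op T (Pop T x) = (\<lambda>k. eps T *\<^sub>C Pop T (N_op T x) k)"
proof
  fix k
  show "N_op T (Pop T x) k = eps T *\<^sub>C Pop T (N_op T x) k"
  proof (cases "k < T")
    case True
    have "eps T * eps T ^ sg T k = eps T ^ (Suc (sg T k) mod T)"
      using eps_pow_mod[OF assms, of "Suc (sg T k)"] by simp
    also have "Suc (sg T k) mod T = k" using tg_sg[OF True] by (simp add: tg_def)
    finally have "eps T * eps T ^ sg T k = eps T ^ k" .
    then show ?thesis using True assms
      by (simp add: N_op_def Pop_def sg_lt scaleC_scaleC)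
  next
    case False then show ?thesis by (simp add: N_op_def Pop_def)
  qed
qed

section \<open>Rotation invariance\<close>

lemma scale_cancel: "c \<noteq> 0 \<Longrightarrow> (\<lambda>k. c *\<^sub>C f k) = (\<lambda>k. c *\<^sub>C (g k :: 'a::complex_vector)) \<Longrightarrow> f = g"
proof
  fix k assume c: "c \<noteq> 0" and e: "(\<lambda>k. c *\<^sub>C f k) = (\<lambda>k. c *\<^sub>C g k)"
  then have "inverse c *\<^sub>C (c *\<^sub>C f k) = inverse c *\<^sub>C (c *\<^sub>C g k)" by (simp add: fun_eq_iff)
  then show "f k = g k" using c by (simp add: scaleC_scaleC scaleC_one)
qed

lemma rot:
  fixes \<A> :: "(nat \<Rightarrow> 'a::complex_normed_vector) \<Rightarrow> (nat \<Rightarrow> 'a)"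
  assumes T: "T > 0" and A: "bounded_op_XT T \<A>"
    and toe: "\<forall>x\<in>XT T. \<A> x = toeplitz T At x"
    and z: "z \<in> harmonic_resolvent T \<A>"
  shows "eps T * z \<in> harmonic_resolvent T \<A>"
proof -
  obtain B where B: "bounded_op_XT T B" "\<And>x. x \<in> XT T \<Longrightarrow> B (Lz T \<A> z x) = x"
      "\<And>x. x \<in> XT T \<Longrightarrow> Lz T \<A> z (B x) = x"
    using z unfolding hr_alt by blast
  obtain Cb where Cb: "Cb > 0" "\<And>x. x \<in> XT T \<Longrightarrow> XT_norm T (B x) \<le> Cb * XT_norm T x"
    using bop_bound[OF B(1)] by blast
  let ?e = "eps T"
  have AP: "\<A> (Pop T u) = Pop T (\<A> u)" if "u \<in> XT T" for u
    using toe that Pop_XT toeplitz_Pop[OF T] by metis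
  have key: "Lz T \<A> (?e * z) (Pop T u) = (\<lambda>k. ?e *\<^sub>C Pop T (Lz T \<A> z u) k)" if u: "u \<in> XT T" for u
    unfolding Lz_def AP[OF u] N_Pop[OF T]
    by (auto simp: Pop_def fun_eq_iff scaleC_diff_right scaleC_scaleC)
  have Qlin: "Qop T (\<lambda>k. ?e *\<^sub>C Pop T w k) = (\<lambda>k. ?e *\<^sub>C w k)" if "w \<in> XT T" for w
    using that by (simp add: Qop_scale Qop_Pop[OF T])
  show ?thesis
  proof (rule resolvent_intro[OF A, where C = Cb])
    fix x :: "nat \<Rightarrow> 'a" assume x: "x \<in> XT T"
    define v where "v = Qop T (\<lambda>k. inverse ?e *\<^sub>C x k)"
    have v: "v \<in> XT T" by (simp add: v_def Qop_XT)
    have Bv: "B v \<in> XT T" by (rule bop_XT[OF B(1) v])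
    have "Lz T \<A> (?e * z) (Pop T (B v)) = (\<lambda>k. ?e *\<^sub>C Pop T v k)"
      using key[OF Bv] B(3)[OF v] by simp
    also have "Pop T v = (\<lambda>k. inverse ?e *\<^sub>C x k)"
      unfolding v_def using x by (intro Pop_Qop[OF T] XT_scale)
    finally have "Lz T \<A> (?e * z) (Pop T (B v)) = x"
      using eps_nz[of T] by (simp add: scaleC_scaleC scaleC_one)
    then show "\<exists>y\<in>XT T. Lz T \<A> (?e * z) y = x" using Pop_XT by blast
  next
    fix y1 y2 :: "nat \<Rightarrow> 'a"
    assume y: "y1 \<in> XT T" "y2 \<in> XT T" "Lz T \<A> (?e * z) y1 = Lz T \<A> (?e * z) y2"
    have "Lz T \<A> (?e * z) (Pop T (Qop T y1)) = Lz T \<A> (?e * z) (Pop T (Qop T y2))"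
      using y by (simp add: Pop_Qop[OF T])
    then have "(\<lambda>k. ?e *\<^sub>C Pop T (Lz T \<A> z (Qop T y1)) k) = (\<lambda>k. ?e *\<^sub>C Pop T (Lz T \<A> z (Qop T y2)) k)"
      by (simp add: key Qop_XT)
    then have "Pop T (Lz T \<A> z (Qop T y1)) = Pop T (Lz T \<A> z (Qop T y2))"
      by (rule scale_cancel[OF eps_nz])
    then have "Qop T (Pop T (Lz T \<A> z (Qop T y1))) = Qop T (Pop T (Lz T \<A> z (Qop T y2)))" by simp
    then have "Lz T \<A> z (Qop T y1) = Lz T \<A> z (Qop T y2)"
      by (simp add: Qop_Pop[OF T] Lz_XT[OF A] Qop_XT)
    then have "B (Lz T \<A> z (Qop T y1)) = B (Lz T \<A> z (Qop T y2))" by simp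
    then have "Qop T y1 = Qop T y2" by (simp add: B(2) Qop_XT)
    then have "Pop T (Qop T y1) = Pop T (Qop T y2)" by simp
    then show "y1 = y2" using y by (simp add: Pop_Qop[OF T])
  next
    fix x y :: "nat \<Rightarrow> 'a" assume xy: "x \<in> XT T" "y \<in> XT T" "Lz T \<A> (?e * z) y = x"
    have "x = (\<lambda>k. ?e *\<^sub>C Pop T (Lz T \<A> z (Qop T y)) k)"
      using xy key[OF Qop_XT[of T y]] by (simp add: Pop_Qop[OF T])
    then have "Qop T x = (\<lambda>k. ?e *\<^sub>C Lz T \<A> z (Qop T y) k)"
      by (simp add: Qlin Lz_XT[OF A] Qop_XT)
    then have "Lz T \<A> z (Qop T y) = (\<lambda>k. inverse ?e *\<^sub>C Qop T x k)"
      using eps_nz[of T] by (simp add: scaleC_scaleC scaleC_one)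
    then have "Qop T y = B (\<lambda>k. inverse ?e *\<^sub>C Qop T x k)"
      using B(2)[OF Qop_XT[of T y]] by simp
    then have "XT_norm T y = XT_norm T (B (\<lambda>k. inverse ?e *\<^sub>C Qop T x k))"
      using Qop_norm[OF T, of y] by simp
    also have "\<dots> \<le> Cb * XT_norm T (\<lambda>k. inverse ?e *\<^sub>C Qop T x k)"
      by (intro Cb(2) XT_scale Qop_XT)
    also have "XT_norm T (\<lambda>k. inverse ?e *\<^sub>C Qop T x k) = XT_norm T x"
      by (simp add: XT_norm_scale Qop_norm[OF T] norm_inverse eps_norm)
    finally show "XT_norm T y \<le> Cb * XT_norm T x" .
  qed
qed

theorem proposition6:
  fixes T :: nat
    and \<A> :: "(nat \<Rightarrow> 'a::chilbert_space) \<Rightarrow> (nat \<Rightarrow> 'a)"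
  assumes T_pos: "T > 0"
    and A_bdd: "bounded_op_XT T \<A>"
  shows "open (harmonic_resolvent T \<A>)
         \<and> (\<exists>e>0. ball 0 e \<subseteq> harmonic_resolvent T \<A>)
         \<and> harmonic_resolvent T \<A> \<noteq> {}
         \<and> (\<forall>A :: int \<Rightarrow> 'a \<Rightarrow> 'a.
               (\<forall>t. A (t + int T) = A t) \<longrightarrow> (\<forall>t. bounded_clinear (A t)) \<longrightarrow>
               (\<forall>x\<in>XT T. \<A> x = toeplitz T A x) \<longrightarrow>
               (\<lambda>z. eps T * z) ` harmonic_resolvent T \<A> = harmonic_resolvent T \<A>)"
proof (intro conjI allI impI)
  have z0: "0 \<in> harmonic_resolvent T \<A>" by (rule zero_in[OF A_bdd])
  show "open (harmonic_resolvent T \<A>)"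
    unfolding open_contains_ball using open_step[OF A_bdd] by blast
  show "\<exists>e>0. ball 0 e \<subseteq> harmonic_resolvent T \<A>" using open_step[OF A_bdd z0] .
  show "harmonic_resolvent T \<A> \<noteq> {}" using z0 by blast
  fix A :: "int \<Rightarrow> 'a \<Rightarrow> 'a"
  assume toe: "\<forall>x\<in>XT T. \<A> x = toeplitz T A x"
  have R: "eps T * z \<in> harmonic_resolvent T \<A>" if "z \<in> harmonic_resolvent T \<A>" for z
    by (rule rot[OF T_pos A_bdd toe that])
  show "(\<lambda>z. eps T * z) ` harmonic_resolvent T \<A> = harmonic_resolvent T \<A>"
  proof
    show "(\<lambda>z. eps T * z) ` harmonic_resolvent T \<A> \<subseteq> harmonic_resolvent T \<A>" using R by blast
  next
    show "harmonic_resolvent T \<A> \<subseteq> (\<lambda>z. eps T * z) ` harmonic_resolvent T \<A>"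
    proof
      fix w assume w: "w \<in> harmonic_resolvent T \<A>"
      have pw: "eps T ^ n * w \<in> harmonic_resolvent T \<A>" for n
      proof (induction n)
        case 0 then show ?case using w by simp
      next
        case (Suc n) then show ?case using R[OF Suc] by (simp add: mult.assoc)
      qed
      have "eps T * (eps T ^ (T - 1) * w) = eps T ^ T * w"
        using T_pos by (simp add: mult.assoc[symmetric] power_Suc[symmetric])
      also have "\<dots> = w" by (simp add: eps_pow_T[OF T_pos])
      finally show "w \<in> (\<lambda>z. eps T * z) ` harmonic_resolvent T \<A>"
        using pw[of "T - 1"] by (metis image_eqI)
    qed
  qed
qed

end
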